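(* Let $K$ be a perfect field, $L/K$ a finite extension, and let $L_1,\dots,L_s$ ($s=s_K(L)$) be the distinct subfields of $\bar K$ isomorphic to $L$ over $K$. Suppose there is a permutation $(i_1,\dots,i_s)$ of $(1,\dots,s)$ such that the tower $K\subseteq L_{i_1}\subseteq L_{i_1}L_{i_2}\subseteq\cdots\subseteq L_{i_1}\cdots L_{i_s}=\tilde L$ consists of $s+1$ distinct fields. Then for each integer $0\le a\le s$ there exists a finite extension $M/K$ with $\rho_K(M,L)=a\cdot r_K(L)$.
   Context: $\bar K$ is a fixed algebraic closure; $\tilde L$ is the Galois closure of $L/K$ in $\bar K$, $G=\mathrm{Gal}(\tilde L/K)$, $H=\mathrm{Gal}(\tilde L/L)$, $s_K(L)=[G:N_G(H)]$, and $r_K(L)=[N_G(H):H]$ (the number of roots of the minimal polynomial $f$ of a primitive element of $L/K$ lying in $L$). For a finite extension $M/K$, $\rho_K(M,L)$ is the number of roots of $f$ lying in $M$. *)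

theory Defs
  imports "HOL-Algebra.Algebraic_Closure" "HOL-Algebra.Generated_Fields"
begin

text \<open>All fields are subfields of a fixed algebraic closure Kbar of K
  (locale algebraic_closure Kbar K).\<close>

definition perfect_field :: "'a ring \<Rightarrow> 'a set \<Rightarrow> bool" where
  "perfect_field Kbar K \<longleftrightarrow>
     (\<forall>p \<in> carrier (univ_poly Kbar K). pirreducible\<^bsub>Kbar\<^esub> K p \<longrightarrow>
        (\<forall>x. count (ring.roots Kbar p) x \<le> 1))"

definition finite_ext :: "'a ring \<Rightarrow> 'a set \<Rightarrow> 'a set \<Rightarrow> bool" where
  "finite_ext Kbar K M \<longleftrightarrow> subfield M Kbar \<and> K \<subseteq> M \<and> ring.finite_dimension Kbar K M"

definition conjugate_fields :: "'a ring \<Rightarrow> 'a set \<Rightarrow> 'a set \<Rightarrow> 'a set set" where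
  "conjugate_fields Kbar K L =
     {\<sigma> ` L | \<sigma>. \<sigma> \<in> ring_hom (Kbar\<lparr>carrier := L\<rparr>) Kbar \<and> (\<forall>k \<in> K. \<sigma> k = k)}"

definition s_K :: "'a ring \<Rightarrow> 'a set \<Rightarrow> 'a set \<Rightarrow> nat" where
  "s_K Kbar K L = card (conjugate_fields Kbar K L)"

text \<open>rho_K(M,L) for L = K(alpha): the number of roots of the minimal polynomial
  f = Irr K alpha lying in M.\<close>
definition rho_K :: "'a ring \<Rightarrow> 'a set \<Rightarrow> 'a \<Rightarrow> 'a set \<Rightarrow> nat" where
  "rho_K Kbar K \<alpha> M = card {x \<in> M. ring.eval Kbar (ring.Irr Kbar K \<alpha>) x = \<zero>\<^bsub>Kbar\<^esub>}"

definition r_K :: "'a ring \<Rightarrow> 'a set \<Rightarrow> 'a \<Rightarrow> 'a set \<Rightarrow> nat" where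
  "r_K Kbar K \<alpha> L = rho_K Kbar K \<alpha> L"

definition tower :: "'a ring \<Rightarrow> 'a set \<Rightarrow> (nat \<Rightarrow> 'a set) \<Rightarrow> nat \<Rightarrow> 'a set" where
  "tower Kbar K Ls j = (if j = 0 then K else generate_field Kbar (\<Union>i \<in> {1..j}. Ls i))"

end

theory Submission
  imports Defs
begin


context algebraic_closure
begin

lemma gen_eq_simple:
  assumes "x \<in> carrier L"
  shows "generate_field L (insert x K) = simple_extension K x"
proof
  have alg: "(algebraic over K) x" using algebraic_extension[OF assms] .
  have sf: "subfield (simple_extension K x) L"
    using simple_extension_is_subfield[OF subfield_axioms assms] alg by simp
  have "insert x K \<subseteq> simple_extension K x"
    using simple_extension_mem[OF subfieldE(1)[OF subfield_axioms] assms]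
          simple_extension_incl[OF subset assms] by auto
  then show "generate_field L (insert x K) \<subseteq> simple_extension K x"
    using generate_field_min_subfield1[OF _ sf] assms subset by auto
next
  have ins: "insert x K \<subseteq> carrier L" using assms subset by auto
  show "simple_extension K x \<subseteq> generate_field L (insert x K)"
    apply (rule simple_extension_subring_incl)
    using generate_field_is_subfield[OF ins] subfieldE(1) apply blast
    using generate_fieldE(2)[OF ins refl] by auto
qed

lemma simple_ext_props:
  assumes "x \<in> carrier L"
  shows "subfield (simple_extension K x) L" "K \<subseteq> simple_extension K x"
    "x \<in> simple_extension K x" "simple_extension K x \<subseteq> carrier L"
    "simple_extension K x = (\<lambda>p. eval p x) ` carrier (K[X])"
  using simple_extension_is_subfield[OF subfield_axioms assms] algebraic_extension[OF assms]
    simple_extension_mem[OF subfieldE(1)[OF subfield_axioms] assms]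
    simple_extension_incl[OF subset assms] simple_extension_in_carrier[OF subset assms]
    simple_extension_as_eval_img[OF subset assms] by auto

lemma simple_ext_min:
  assumes "x \<in> F" "subfield F L" "K \<subseteq> F"
  shows "simple_extension K x \<subseteq> F"
  using simple_extension_subring_incl[OF subfieldE(1)[OF assms(2)] assms(3,1)] .

lemma Irr_same:
  assumes "a \<in> carrier L" "b \<in> carrier L" "eval (Irr K a) b = \<zero>"
  shows "Irr K b = Irr K a"
proof -
  have "\<exists>!p \<in> carrier (K[X]). pirreducible K p \<and> eval p b = \<zero> \<and> lead_coeff p = \<one>"
    using minimal_polynomial_is_unique[OF subfield_axioms assms(2) algebraic_extension[OF assms(2)]] .
  moreover have "Irr K a \<in> carrier (K[X]) \<and> pirreducible K (Irr K a) \<and> eval (Irr K a) b = \<zero> \<and> lead_coeff (Irr K a) = \<one>"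
    using IrrE[OF subfield_axioms assms(1) algebraic_extension[OF assms(1)]] assms(3) by auto
  ultimately show ?thesis unfolding Irr_def[of K b] by (intro the1_equality) auto
qed

lemma ker_same:
  assumes "a \<in> carrier L" "b \<in> carrier L" "eval (Irr K a) b = \<zero>"
  shows "a_kernel (K[X]) L (\<lambda>p. eval p b) = a_kernel (K[X]) L (\<lambda>p. eval p a)"
  using Irr_generates_ker[OF subfield_axioms assms(1) algebraic_extension[OF assms(1)]]
    Irr_generates_ker[OF subfield_axioms assms(2) algebraic_extension[OF assms(2)]]
    Irr_same[OF assms] by simp

lemma const_poly:
  assumes "k \<in> K"
  shows "\<exists>p \<in> carrier (K[X]). \<forall>x \<in> carrier L. eval p x = k"
proof (cases "k = \<zero>")
  case True
  then show ?thesis by (intro bexI[of _ "[]"]) (auto simp: univ_poly_def polynomial_def)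
next
  case False
  have "k \<in> carrier L" using assms subset by auto
  then show ?thesis using False assms
    by (intro bexI[of _ "[k]"]) (auto simp: univ_poly_def polynomial_def)
qed

lemma eval_transfer:
  assumes "a \<in> carrier L" "b \<in> carrier L" "eval (Irr K a) b = \<zero>"
    and "p \<in> carrier (K[X])" "q \<in> carrier (K[X])" "eval p a = eval q a"
  shows "eval p b = eval q b"
proof -
  interpret A: ring_hom_cring "K[X]" L "\<lambda>p. eval p a"
    using eval_cring_hom[OF subfieldE(1)[OF subfield_axioms] assms(1)] .
  interpret B: ring_hom_cring "K[X]" L "\<lambda>p. eval p b"
    using eval_cring_hom[OF subfieldE(1)[OF subfield_axioms] assms(2)] .
  let ?d = "p \<oplus>\<^bsub>K[X]\<^esub> (\<ominus>\<^bsub>K[X]\<^esub> q)"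
  have dC: "?d \<in> carrier (K[X])" using assms(4,5) by auto
  have "eval ?d a = eval p a \<oplus> \<ominus> eval q a" using assms(4,5) by simp
  also have "\<dots> = \<zero>" using assms(6) assms(5) A.hom_closed r_neg by auto
  finally have "?d \<in> a_kernel (K[X]) L (\<lambda>p. eval p a)" using dC unfolding a_kernel_def' by auto
  hence "?d \<in> a_kernel (K[X]) L (\<lambda>p. eval p b)" using ker_same[OF assms(1-3)] by simp
  hence "eval ?d b = \<zero>" unfolding a_kernel_def' by auto
  hence "eval p b \<oplus> \<ominus> eval q b = \<zero>" using assms(4,5) by simp
  thus ?thesis using assms(4,5) B.hom_closed
    by (metis a_minus_def r_right_minus_eq)
qed

definition ext_map :: "'a \<Rightarrow> 'a \<Rightarrow> 'a \<Rightarrow> 'a" where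
  "ext_map a b y = eval (SOME p. p \<in> carrier (K[X]) \<and> eval p a = y) b"

lemma ext_map_eval:
  assumes "a \<in> carrier L" "b \<in> carrier L" "eval (Irr K a) b = \<zero>" "p \<in> carrier (K[X])"
  shows "ext_map a b (eval p a) = eval p b"
proof -
  let ?P = "\<lambda>q. q \<in> carrier (K[X]) \<and> eval q a = eval p a"
  have "?P (SOME q. ?P q)" using someI[of ?P p] assms(4) by auto
  thus ?thesis unfolding ext_map_def using eval_transfer[OF assms(1-3) _ assms(4)] by auto
qed

lemma ext_map_hom:
  assumes "a \<in> carrier L" "b \<in> carrier L" "eval (Irr K a) b = \<zero>"
  shows "ext_map a b \<in> ring_hom (L\<lparr>carrier := simple_extension K a\<rparr>) L"
    "\<forall>k\<in>K. ext_map a b k = k" "ext_map a b a = b"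
proof -
  interpret A: ring_hom_cring "K[X]" L "\<lambda>p. eval p a"
    using eval_cring_hom[OF subfieldE(1)[OF subfield_axioms] assms(1)] .
  interpret B: ring_hom_cring "K[X]" L "\<lambda>p. eval p b"
    using eval_cring_hom[OF subfieldE(1)[OF subfield_axioms] assms(2)] .
  note img = simple_ext_props(5)[OF assms(1)]
  note E = ext_map_eval[OF assms]
  show "ext_map a b \<in> ring_hom (L\<lparr>carrier := simple_extension K a\<rparr>) L"
  proof (rule ring_hom_memI)
    fix x assume "x \<in> carrier (L\<lparr>carrier := simple_extension K a\<rparr>)"
    then obtain p where p: "p \<in> carrier (K[X])" "x = eval p a" using img by auto
    thus "ext_map a b x \<in> carrier L" using E by auto
  next
    fix x y assume "x \<in> carrier (L\<lparr>carrier := simple_extension K a\<rparr>)"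
       "y \<in> carrier (L\<lparr>carrier := simple_extension K a\<rparr>)"
    then obtain p q where p: "p \<in> carrier (K[X])" "x = eval p a"
       and q: "q \<in> carrier (K[X])" "y = eval q a" using img by auto
    have ex: "ext_map a b x = eval p b" "ext_map a b y = eval q b" using E p q by auto
    have "x \<otimes> y = eval (p \<otimes>\<^bsub>K[X]\<^esub> q) a" using p q by simp
    moreover have "p \<otimes>\<^bsub>K[X]\<^esub> q \<in> carrier (K[X])" using p q by simp
    ultimately have "ext_map a b (x \<otimes> y) = eval (p \<otimes>\<^bsub>K[X]\<^esub> q) b" using E by metis
    moreover have "eval (p \<otimes>\<^bsub>K[X]\<^esub> q) b = eval p b \<otimes> eval q b" using p q by simp
    ultimately show "ext_map a b (x \<otimes>\<^bsub>L\<lparr>carrier := simple_extension K a\<rparr>\<^esub> y) = ext_map a b x \<otimes>\<^bsub>L\<^esub> ext_map a b y"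
      using ex by simp
    have "x \<oplus> y = eval (p \<oplus>\<^bsub>K[X]\<^esub> q) a" using p q by simp
    moreover have "p \<oplus>\<^bsub>K[X]\<^esub> q \<in> carrier (K[X])" using p q by simp
    ultimately have "ext_map a b (x \<oplus> y) = eval (p \<oplus>\<^bsub>K[X]\<^esub> q) b" using E by metis
    moreover have "eval (p \<oplus>\<^bsub>K[X]\<^esub> q) b = eval p b \<oplus> eval q b" using p q by simp
    ultimately show "ext_map a b (x \<oplus>\<^bsub>L\<lparr>carrier := simple_extension K a\<rparr>\<^esub> y) = ext_map a b x \<oplus>\<^bsub>L\<^esub> ext_map a b y"
      using ex by simp
  next
    have "\<one> = eval \<one>\<^bsub>K[X]\<^esub> a" by simp
    thus "ext_map a b \<one>\<^bsub>L\<lparr>carrier := simple_extension K a\<rparr>\<^esub> = \<one>\<^bsub>L\<^esub>"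
      using E[of "\<one>\<^bsub>K[X]\<^esub>"] by simp
  qed
  show "\<forall>k\<in>K. ext_map a b k = k"
  proof
    fix k assume "k \<in> K"
    then obtain p where "p \<in> carrier (K[X])" "\<forall>x \<in> carrier L. eval p x = k" using const_poly by blast
    thus "ext_map a b k = k" using E[of p] assms by metis
  qed
  have "X \<in> carrier (K[X])" using var_closed(1)[OF subfieldE(1)[OF subfield_axioms]] .
  thus "ext_map a b a = b" using E[of X] eval_var assms by metis
qed

lemma khom_eval:
  assumes "h \<in> ring_hom (L\<lparr>carrier := F\<rparr>) L" "subfield F L" "K \<subseteq> F"
    "\<forall>k\<in>K. h k = k" "x \<in> F" "p \<in> carrier (K[X])"
  shows "h (eval p x) = eval p (h x)"
proof -
  have sr: "subring F L" using assms(2) subfieldE(1) by blast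
  interpret H: ring_hom_ring "L\<lparr>carrier := F\<rparr>" L h
    using ring_hom_ringI2[OF subring_is_ring[OF sr] ring_axioms assms(1)] .
  have sp: "set p \<subseteq> K" using polynomial_incl assms(6) univ_poly_carrier by blast
  hence "map h p = p" using assms(4) by (induct p) auto
  moreover have "h (ring.eval (L\<lparr>carrier := F\<rparr>) p x) = eval (map h p) (h x)"
    using H.eval_hom'[of x p] assms(3,5) sp by auto
  ultimately show ?thesis using eval_consistent[OF sr] by simp
qed

lemma khom_props:
  assumes "a \<in> carrier L" "h \<in> ring_hom (L\<lparr>carrier := simple_extension K a\<rparr>) L"
    "\<forall>k\<in>K. h k = k"
  shows "h a \<in> carrier L" "eval (Irr K a) (h a) = \<zero>"
    "h ` simple_extension K a = simple_extension K (h a)"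
    "inj_on h (simple_extension K a)"
proof -
  note P = simple_ext_props[OF assms(1)]
  note Ev = khom_eval[OF assms(2) P(1) P(2) assms(3)]
  note I = IrrE[OF subfield_axioms assms(1) algebraic_extension[OF assms(1)]]
  have sr: "subring (simple_extension K a) L" using P(1) subfieldE(1) by blast
  interpret H: ring_hom_ring "L\<lparr>carrier := simple_extension K a\<rparr>" L h
    using ring_hom_ringI2[OF subring_is_ring[OF sr] ring_axioms assms(2)] .
  show c: "h a \<in> carrier L" using H.hom_closed P(3) by simp
  show "eval (Irr K a) (h a) = \<zero>" using Ev[OF P(3) I(1)] I(4) H.hom_zero by simp
  show "h ` simple_extension K a = simple_extension K (h a)"
    unfolding P(5) simple_ext_props(5)[OF c] image_image
  proof (rule image_cong[OF refl])
    fix p assume "p \<in> carrier (K[X])"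
    thus "h (eval p a) = eval p (h a)" using Ev[OF P(3)] by simp
  qed
  show "inj_on h (simple_extension K a)"
    using non_trivial_field_hom_is_inj[OF assms(2) subfield_iff(2)[OF P(1)] field_axioms] by simp
qed

lemma eval_in_sub:
  assumes "subfield F L" "K \<subseteq> F" "p \<in> carrier (K[X])" "x \<in> F"
  shows "eval p x \<in> F"
proof -
  have sr: "subring F L" using assms(1) subfieldE(1) by blast
  have sp: "set p \<subseteq> K" using polynomial_incl assms(3) univ_poly_carrier by blast
  show ?thesis
    using ring.eval_in_carrier[OF subring_is_ring[OF sr], of p x] sp assms(2,4)
      eval_consistent[OF sr] by auto
qed

lemma Irr_carrier: "a \<in> carrier L \<Longrightarrow> Irr K a \<in> carrier (K[X])"
  using IrrE(1)[OF subfield_axioms _ algebraic_extension] by blast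

lemma roots_finite:
  assumes "a \<in> carrier L"
  shows "finite {x \<in> carrier L. eval (Irr K a) x = \<zero>}"
proof -
  note I = IrrE[OF subfield_axioms assms algebraic_extension[OF assms]]
  have ne: "Irr K a \<noteq> []"
    using pirreducibleE(1)[OF subfieldE(1)[OF subfield_axioms] I(1,2)] .
  have "polynomial K (Irr K a)" using I(1) univ_poly_carrier by blast
  hence "polynomial (carrier L) (Irr K a)"
    by (rule carrier_polynomial[OF subfieldE(1)[OF subfield_axioms]])
  hence "Irr K a \<in> carrier (poly_ring L)" using univ_poly_carrier by blast
  hence "finite {x. is_root (Irr K a) x}" by (rule finite_number_of_roots)
  moreover have "{x. is_root (Irr K a) x} = {x \<in> carrier L. eval (Irr K a) x = \<zero>}"
    unfolding is_root_def using ne by auto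
  ultimately show ?thesis by simp
qed

lemma root_card:
  assumes "a \<in> carrier L" "b \<in> carrier L" "eval (Irr K a) b = \<zero>"
  shows "card {x \<in> simple_extension K b. eval (Irr K a) x = \<zero>}
       = card {x \<in> simple_extension K a. eval (Irr K a) x = \<zero>}"
proof -
  let ?h = "ext_map a b"
  note H = ext_map_hom[OF assms]
  note P = simple_ext_props[OF assms(1)]
  note KP = khom_props[OF assms(1) H(1) H(2)]
  note Ev = khom_eval[OF H(1) P(1) P(2) H(2) _ Irr_carrier[OF assms(1)]]
  have sr: "subring (simple_extension K a) L" using P(1) subfieldE(1) by blast
  interpret HH: ring_hom_ring "L\<lparr>carrier := simple_extension K a\<rparr>" L ?h
    using ring_hom_ringI2[OF subring_is_ring[OF sr] ring_axioms H(1)] .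
  have z: "\<zero> \<in> simple_extension K a" using sr subringE(2) by blast
  have hz: "?h \<zero> = \<zero>" using HH.hom_zero by simp
  have img: "?h ` {x \<in> simple_extension K a. eval (Irr K a) x = \<zero>}
      = {y \<in> simple_extension K b. eval (Irr K a) y = \<zero>}"
  proof
    show "?h ` {x \<in> simple_extension K a. eval (Irr K a) x = \<zero>}
      \<subseteq> {y \<in> simple_extension K b. eval (Irr K a) y = \<zero>}"
    proof (rule image_subsetI)
      fix x assume x: "x \<in> {x \<in> simple_extension K a. eval (Irr K a) x = \<zero>}"
      have "eval (Irr K a) (?h x) = ?h (eval (Irr K a) x)" by (rule Ev[symmetric]) (use x in auto)
      also have "\<dots> = \<zero>" using x hz by simp
      finally show "?h x \<in> {y \<in> simple_extension K b. eval (Irr K a) y = \<zero>}"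
        using x KP(3) H(3) by auto
    qed
  next
    show "{y \<in> simple_extension K b. eval (Irr K a) y = \<zero>}
      \<subseteq> ?h ` {x \<in> simple_extension K a. eval (Irr K a) x = \<zero>}"
    proof
      fix y assume y: "y \<in> {y \<in> simple_extension K b. eval (Irr K a) y = \<zero>}"
      then obtain x where x: "x \<in> simple_extension K a" "y = ?h x" using KP(3) H(3) by auto
      have "?h (eval (Irr K a) x) = ?h \<zero>" using Ev[OF x(1)] x(2) y hz by simp
      moreover have "eval (Irr K a) x \<in> simple_extension K a"
        using eval_in_sub[OF P(1) P(2) Irr_carrier[OF assms(1)] x(1)] .
      ultimately have "eval (Irr K a) x = \<zero>" using KP(4) z unfolding inj_on_def by blast
      thus "y \<in> ?h ` {x \<in> simple_extension K a. eval (Irr K a) x = \<zero>}" using x by auto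
    qed
  qed
  have inj: "inj_on ?h {x \<in> simple_extension K a. eval (Irr K a) x = \<zero>}"
    by (rule inj_on_subset[OF KP(4)]) blast
  show ?thesis using card_image[OF inj] unfolding img .
qed

lemma root_gen:
  assumes "a \<in> carrier L" "b \<in> carrier L" "eval (Irr K a) b = \<zero>"
    "c \<in> simple_extension K b" "eval (Irr K a) c = \<zero>"
  shows "simple_extension K c = simple_extension K b"
proof -
  note Pb = simple_ext_props[OF assms(2)]
  have cC: "c \<in> carrier L" using Pb(4) assms(4) by auto
  note Pc = simple_ext_props[OF cC]
  have sub: "simple_extension K c \<subseteq> simple_extension K b"
    using simple_ext_min[OF assms(4) Pb(1,2)] .
  let ?Rc = "{x \<in> simple_extension K c. eval (Irr K a) x = \<zero>}"
  let ?Rb = "{x \<in> simple_extension K b. eval (Irr K a) x = \<zero>}"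
  have s1: "?Rc \<subseteq> ?Rb" using sub by auto
  have s2: "finite ?Rb"
    by (rule finite_subset[OF _ roots_finite[OF assms(1)]]) (use Pb(4) in auto)
  have s3: "card ?Rc = card ?Rb"
    using root_card[OF assms(1) cC assms(5)] root_card[OF assms(1-3)] by simp
  have "?Rc = ?Rb" by (rule card_subset_eq[OF s2 s1 s3])
  hence "b \<in> simple_extension K c" using Pb(3) assms(3) by auto
  hence "simple_extension K b \<subseteq> simple_extension K c"
    using simple_ext_min[OF _ Pc(1,2)] by blast
  thus ?thesis using sub by blast
qed

lemma conj_char:
  assumes "a \<in> carrier L"
  shows "{h ` (simple_extension K a) | h. h \<in> ring_hom (L\<lparr>carrier := simple_extension K a\<rparr>) L \<and> (\<forall>k \<in> K. h k = k)}
       = {simple_extension K b | b. b \<in> carrier L \<and> eval (Irr K a) b = \<zero>}"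
proof
  show "{h ` (simple_extension K a) | h. h \<in> ring_hom (L\<lparr>carrier := simple_extension K a\<rparr>) L \<and> (\<forall>k \<in> K. h k = k)}
       \<subseteq> {simple_extension K b | b. b \<in> carrier L \<and> eval (Irr K a) b = \<zero>}"
  proof
    fix M assume "M \<in> {h ` (simple_extension K a) | h. h \<in> ring_hom (L\<lparr>carrier := simple_extension K a\<rparr>) L \<and> (\<forall>k \<in> K. h k = k)}"
    then obtain h where h: "h \<in> ring_hom (L\<lparr>carrier := simple_extension K a\<rparr>) L" "\<forall>k \<in> K. h k = k"
      "M = h ` simple_extension K a" by blast
    note KP = khom_props[OF assms h(1,2)]
    have "M = simple_extension K (h a)" using KP(3) h(3) by simp
    thus "M \<in> {simple_extension K b | b. b \<in> carrier L \<and> eval (Irr K a) b = \<zero>}"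
      using KP(1,2) by blast
  qed
next
  show "{simple_extension K b | b. b \<in> carrier L \<and> eval (Irr K a) b = \<zero>}
      \<subseteq> {h ` (simple_extension K a) | h. h \<in> ring_hom (L\<lparr>carrier := simple_extension K a\<rparr>) L \<and> (\<forall>k \<in> K. h k = k)}"
  proof
    fix M assume "M \<in> {simple_extension K b | b. b \<in> carrier L \<and> eval (Irr K a) b = \<zero>}"
    then obtain b where b: "b \<in> carrier L" "eval (Irr K a) b = \<zero>" "M = simple_extension K b" by auto
    note H = ext_map_hom[OF assms b(1,2)]
    have "M = ext_map a b ` simple_extension K a"
      using khom_props(3)[OF assms H(1,2)] H(3) b(3) by simp
    thus "M \<in> {h ` (simple_extension K a) | h. h \<in> ring_hom (L\<lparr>carrier := simple_extension K a\<rparr>) L \<and> (\<forall>k \<in> K. h k = k)}"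
      using H(1,2) by blast
  qed
qed

end


theorem mainTheorem18:
  fixes Kbar :: "'a ring" and K L :: "'a set" and \<alpha> :: 'a
  assumes "algebraic_closure Kbar K"
    and "perfect_field Kbar K"
    and "finite_ext Kbar K L"
    and "\<alpha> \<in> L" and "generate_field Kbar (insert \<alpha> K) = L"
    and "\<exists>Ls. bij_betw Ls {1..s_K Kbar K L} (conjugate_fields Kbar K L)
              \<and> inj_on (tower Kbar K Ls) {0..s_K Kbar K L}"
  shows "\<forall>a::nat. a \<le> s_K Kbar K L \<longrightarrow>
           (\<exists>M. finite_ext Kbar K M \<and> rho_K Kbar K \<alpha> M = a * r_K Kbar K \<alpha> L)"
proof (intro allI impI)
  fix a :: nat assume as: "a \<le> s_K Kbar K L"
  interpret C: algebraic_closure Kbar K by (rule assms(1))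
  have Lsf: "subfield L Kbar" "K \<subseteq> L" using assms(3) unfolding finite_ext_def by auto
  have Lc: "L \<subseteq> carrier Kbar" using Lsf(1) subfieldE(3) by blast
  have \<alpha>c: "\<alpha> \<in> carrier Kbar" using assms(4) Lc by auto
  have LE: "L = C.simple_extension K \<alpha>" using C.gen_eq_simple[OF \<alpha>c] assms(5) by simp
  define f where "f = ring.Irr Kbar K \<alpha>"
  define Rt where "Rt = (\<lambda>M. {x \<in> M. ring.eval Kbar f x = \<zero>\<^bsub>Kbar\<^esub>})"
  define s where "s = s_K Kbar K L"
  define r where "r = card (Rt L)"
  have rK: "r_K Kbar K \<alpha> L = r" unfolding r_def r_K_def rho_K_def Rt_def f_def ..
  have rho: "rho_K Kbar K \<alpha> M = card (Rt M)" for M unfolding rho_K_def Rt_def f_def ..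
  have CF: "conjugate_fields Kbar K L = {C.simple_extension K b | b. b \<in> carrier Kbar \<and> ring.eval Kbar f b = \<zero>\<^bsub>Kbar\<^esub>}"
    unfolding conjugate_fields_def f_def using C.conj_char[OF \<alpha>c] LE by simp
  obtain Ls where Ls: "bij_betw Ls {1..s} (conjugate_fields Kbar K L)"
    and inj: "inj_on (tower Kbar K Ls) {0..s}" using assms(6) unfolding s_def by blast
  define T where "T = tower Kbar K Ls"
  have LsR: "\<exists>b. b \<in> carrier Kbar \<and> ring.eval Kbar f b = \<zero>\<^bsub>Kbar\<^esub> \<and> Ls i = C.simple_extension K b"
    if "i \<in> {1..s}" for i
  proof -
    have "Ls i \<in> conjugate_fields Kbar K L" using Ls that unfolding bij_betw_def by blast
    thus ?thesis unfolding CF by blast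
  qed
  have LsP: "subfield (Ls i) Kbar" "K \<subseteq> Ls i" "Ls i \<subseteq> carrier Kbar"
     "card (Rt (Ls i)) = r" "finite (Rt (Ls i))" if iI: "i \<in> {1..s}" for i
  proof -
    obtain b where b: "b \<in> carrier Kbar" "ring.eval Kbar f b = \<zero>\<^bsub>Kbar\<^esub>" "Ls i = C.simple_extension K b"
      using LsR[OF iI] by blast
    note P = C.simple_ext_props[OF b(1)]
    show "subfield (Ls i) Kbar" "K \<subseteq> Ls i" "Ls i \<subseteq> carrier Kbar" using P b(3) by auto
    show "card (Rt (Ls i)) = r" unfolding Rt_def r_def b(3) LE
      using C.root_card[OF \<alpha>c b(1)] b(2) unfolding f_def by simp
    show "finite (Rt (Ls i))" unfolding Rt_def
      by (rule finite_subset[OF _ C.roots_finite[OF \<alpha>c]]) (use P(4) b(3) in \<open>auto simp: f_def\<close>)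
  qed
  have Ucar: "(\<Union>i\<in>{1..j}. Ls i) \<subseteq> carrier Kbar" if "j \<le> s" for j
  proof (rule UN_least)
    fix i assume "i \<in> {1..j}" thus "Ls i \<subseteq> carrier Kbar" using LsP(3)[of i] that by auto
  qed
  have T0: "T 0 = K" unfolding T_def tower_def by simp
  have Tj: "T j = generate_field Kbar (\<Union>i\<in>{1..j}. Ls i)" if "j \<noteq> 0" for j
    unfolding T_def tower_def using that by simp
  have Tsub: "subfield (T j) Kbar" if "j \<le> s" for j
    using T0 Tj C.generate_field_is_subfield[OF Ucar[OF that]] C.subfield_axioms by (cases "j = 0") auto
  have LsT: "Ls i \<subseteq> T j" if "1 \<le> i" "i \<le> j" "j \<le> s" for i j
  proof -
    have "Ls i \<subseteq> (\<Union>i\<in>{1..j}. Ls i)" using that(1,2) by (intro UN_upper) auto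
    also have "\<dots> \<subseteq> generate_field Kbar (\<Union>i\<in>{1..j}. Ls i)"
      using C.generate_fieldE(2)[OF Ucar[OF that(3)] refl] .
    also have "\<dots> = T j" using Tj[of j] that by auto
    finally show ?thesis .
  qed
  have KT: "K \<subseteq> T j" if "j \<le> s" for j
  proof (cases "j = 0")
    case True thus ?thesis using T0 by simp
  next
    case False
    hence "K \<subseteq> Ls 1" using LsP(2)[of 1] that by auto
    thus ?thesis using LsT[of 1 j] False that by auto
  qed
  have Tmin: "T j \<subseteq> M" if "j \<le> s" "subfield M Kbar" "K \<subseteq> M" "\<forall>i\<in>{1..j}. Ls i \<subseteq> M" for j M
  proof (cases "j = 0")
    case True thus ?thesis using T0 that by simp
  next
    case False
    thus ?thesis using Tj[OF False] C.generate_field_min_subfield1[OF Ucar[OF that(1)] that(2)] that(4) by auto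
  qed
  have Tmono: "T j \<subseteq> T k" if "j \<le> k" "k \<le> s" for j k
    using Tmin[of j "T k"] Tsub[OF that(2)] KT[OF that(2)] LsT[of _ k] that by auto
  have Tc: "T j \<subseteq> carrier Kbar" if "j \<le> s" for j
    using Tsub[OF that] subfieldE(3) by blast
  have key: "\<exists>c\<in>{1..a}. Ls c = C.simple_extension K b"
    if b: "b \<in> T a" "ring.eval Kbar f b = \<zero>\<^bsub>Kbar\<^esub>" for b
  proof -
    have bc: "b \<in> carrier Kbar" using b(1) Tc[OF as[folded s_def]] by auto
    have "C.simple_extension K b \<in> conjugate_fields Kbar K L" using CF bc b(2) by blast
    hence "C.simple_extension K b \<in> Ls ` {1..s}" using Ls unfolding bij_betw_def by simp
    then obtain c where c: "c \<in> {1..s}" "Ls c = C.simple_extension K b"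
      by (elim imageE) simp
    have "c \<le> a"
    proof (rule ccontr)
      assume "\<not> c \<le> a"
      hence ca: "a \<le> c - 1" "c - 1 < c" "c \<le> s" using c by auto
      have "Ls c \<subseteq> T a" unfolding c(2)
        by (rule C.simple_ext_min[OF b(1) Tsub KT]) (use as s_def in auto)
      also have "\<dots> \<subseteq> T (c - 1)" using Tmono ca by auto
      finally have Lc1: "Ls c \<subseteq> T (c - 1)" .
      have "T c \<subseteq> T (c - 1)"
      proof (rule Tmin[OF ca(3) Tsub KT])
        show "\<forall>i\<in>{1..c}. Ls i \<subseteq> T (c - 1)"
        proof
          fix i assume i: "i \<in> {1..c}"
          show "Ls i \<subseteq> T (c - 1)"
          proof (cases "i = c")
            case True thus ?thesis using Lc1 by simp
          next
            case False
            hence "1 \<le> i" "i \<le> c - 1" "c - 1 \<le> s" using i ca by auto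
            thus ?thesis by (rule LsT)
          qed
        qed
      qed (use ca in auto)
      moreover have "T (c - 1) \<subseteq> T c" using Tmono ca by auto
      ultimately have "T c = T (c - 1)" by auto
      moreover have "c \<in> {0..s}" "c - 1 \<in> {0..s}" using ca by auto
      ultimately have "c = c - 1" using inj unfolding T_def inj_on_def by blast
      thus False using c by auto
    qed
    thus ?thesis using c by auto
  qed
  have disj: "Rt (Ls i) \<inter> Rt (Ls j) = {}" if "i \<in> {1..s}" "j \<in> {1..s}" "i \<noteq> j" for i j
  proof (rule ccontr)
    assume "Rt (Ls i) \<inter> Rt (Ls j) \<noteq> {}"
    then obtain x where x: "x \<in> Ls i" "x \<in> Ls j" "ring.eval Kbar f x = \<zero>\<^bsub>Kbar\<^esub>"
      unfolding Rt_def by auto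
    have "Ls k = C.simple_extension K x" if kk: "k \<in> {1..s}" "x \<in> Ls k" for k
    proof -
      obtain b where b: "b \<in> carrier Kbar" "ring.eval Kbar f b = \<zero>\<^bsub>Kbar\<^esub>" "Ls k = C.simple_extension K b"
        using LsR[OF kk(1)] by blast
      show ?thesis using C.root_gen[OF \<alpha>c b(1)] b x(3) kk(2) unfolding f_def by simp
    qed
    hence "Ls i = Ls j" using x that by auto
    thus False using Ls that unfolding bij_betw_def inj_on_def by blast
  qed
  have RtU: "Rt (T a) = (\<Union>c\<in>{1..a}. Rt (Ls c))"
  proof
    show "Rt (T a) \<subseteq> (\<Union>c\<in>{1..a}. Rt (Ls c))"
    proof
      fix x assume x: "x \<in> Rt (T a)"
      hence xr: "x \<in> T a" "ring.eval Kbar f x = \<zero>\<^bsub>Kbar\<^esub>" unfolding Rt_def by auto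
      obtain c where c: "c \<in> {1..a}" "Ls c = C.simple_extension K x" using key[OF xr] by blast
      have "x \<in> Ls c" using c(2) C.simple_ext_props(3) xr(1) Tc as s_def by auto
      thus "x \<in> (\<Union>c\<in>{1..a}. Rt (Ls c))" using c xr unfolding Rt_def by auto
    qed
  next
    show "(\<Union>c\<in>{1..a}. Rt (Ls c)) \<subseteq> Rt (T a)"
      using LsT[of _ a] as s_def unfolding Rt_def by fastforce
  qed
  have card: "card (Rt (T a)) = a * r"
  proof -
    have "card (\<Union>c\<in>{1..a}. Rt (Ls c)) = (\<Sum>c\<in>{1..a}. card (Rt (Ls c)))"
      by (rule card_UN_disjoint) (use LsP(5) disj as s_def in auto)
    also have "\<dots> = (\<Sum>c\<in>{1..a}. r)" using LsP(4) as s_def by auto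
    finally show ?thesis using RtU by simp
  qed
  have fin: "finite (Rt (T a))" using RtU LsP(5) as s_def by auto
  then obtain xs where xs: "set xs = Rt (T a)" using finite_list by blast
  have xsc: "set xs \<subseteq> carrier Kbar" using xs Tc as s_def unfolding Rt_def by auto
  have alg: "\<And>x. x \<in> set xs \<Longrightarrow> (C.algebraic over K) x" using xsc C.algebraic_extension by auto
  have FE: "T a = C.finite_extension K xs"
  proof
    have sf: "subfield (C.finite_extension K xs) Kbar"
      using C.finite_extension_is_subfield[OF C.subfield_axioms xsc alg] .
    have Kf: "K \<subseteq> C.finite_extension K xs" using C.finite_extension_incl[OF C.subset xsc] .
    have xf: "set xs \<subseteq> C.finite_extension K xs"
      using C.finite_extension_mem[OF subfieldE(1)[OF C.subfield_axioms] xsc] .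
    show "T a \<subseteq> C.finite_extension K xs"
    proof (rule Tmin[OF as[folded s_def] sf Kf], intro ballI)
      fix c assume c: "c \<in> {1..a}"
      obtain b where b: "b \<in> carrier Kbar" "ring.eval Kbar f b = \<zero>\<^bsub>Kbar\<^esub>" "Ls c = C.simple_extension K b"
        using LsR[of c] c as s_def by auto
      have "b \<in> Ls c" using b C.simple_ext_props(3) by auto
      hence "b \<in> Rt (T a)" using RtU c b(2) unfolding Rt_def by auto
      hence "b \<in> C.finite_extension K xs" using xs xf by auto
      thus "Ls c \<subseteq> C.finite_extension K xs" using b(3) C.simple_ext_min[OF _ sf Kf] by auto
    qed
  next
    show "C.finite_extension K xs \<subseteq> T a"
      using C.finite_extension_subring_incl[OF subfieldE(1)[OF Tsub] KT] xs as s_def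
      unfolding Rt_def by auto
  qed
  have a_s: "a \<le> s" using as s_def by simp
  have fd: "C.finite_dimension K (T a)" unfolding FE
    by (rule C.finite_extension_finite_dimension(1)[OF C.subfield_axioms xsc alg])
  have "finite_ext Kbar K (T a)"
    unfolding finite_ext_def using Tsub[OF a_s] KT[OF a_s] fd by simp
  thus "\<exists>M. finite_ext Kbar K M \<and> rho_K Kbar K \<alpha> M = a * r_K Kbar K \<alpha> L"
    using card rho rK by auto
qed

end
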